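(* Let $N(I,O,r)$ be a negator and $T(B,C)$ a proper $(2,3)$-pole. Form the $(2,3)$-pole $M=\operatorname{NT}(N,T)$ as follows: perform the junction of $O$ and $B$; choose one semiedge of $C$, whose dangling edge is $e$, subdivide $e$ with a new vertex $v$ (so that $v$ lies on $e$ and the free end of $e$ remains a semiedge, now of a dangling edge at $v$), and attach the residual semiedge $r$ of $N$ to $v$. The connectors of $M$ are $I=\{i_1,i_2\}$ and $C'=\{e_1,e_2,e_3\}$, where $e_1,e_2$ are the two other semiedges of $C$ and $e_3$ is the free end of the subdivided edge $e$. Then every colouring $\varphi$ of $M$ satisfies $\varphi(i_1)=\varphi(i_2)$ and $\varphi(e_1)+\varphi(e_2)+\varphi(e_3)=0$. Moreover, if $N$ is a perfect negator and $T$ is perfect, then for all $x,a,b,c\in\mathbb{K}$ with $a+b+c=0$ there is a colouring $\varphi$ of $M$ with $(\varphi(i_1),\varphi(i_2),\varphi(e_1),\varphi(e_2),\varphi(e_3))=(x,x,a,b,c)$.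
   Context: A multipole consists of vertices and edges; each edge has two ends, each either incident with a vertex or free; a free end is a semiedge. All multipoles are cubic (every vertex incident with exactly three edge ends; loops and parallel edges allowed). Semiedges are partitioned into connectors; a $(c_1,\dots,c_n)$-pole has connectors of sizes $c_1,\dots,c_n$. The junction of two semiedges identifies the two free ends into a single edge (attaching a semiedge to a vertex means making that vertex the end of it); the junction of two connectors performs junctions along an arbitrary bijection. Let $\mathbb{K}=\{(0,1),(1,0),(1,1)\}\subset\mathbb{Z}_2\times\mathbb{Z}_2$. A colouring of a multipole assigns elements of $\mathbb{K}$ to edges so that at every vertex the three incident edge ends get distinct colours. Flow through a connector $S$: $\varphi_*(S)=\sum_{e\in S}\varphi(e)$. A snark is a connected cubic graph with no colouring. Negator: for a snark $G$ and a path $uwv$ in $G$, $\operatorname{Neg}(G;u,v)$ is the $(2,2,1)$-pole $N(I,O,r)$ obtained by deleting $u,w,v$, with $I$ the two semiedges formerly at $u$, $O$ the two semiedges formerly at $v$, $r$ the semiedge formerly at $w$. A negator $N(\{i_1,i_2\},\{o_1,o_2\},r)$ is perfect if its set of tuples $(\varphi(i_1),\varphi(i_2),\varphi(o_1),\varphi(o_2),\varphi(r))$ over colourings equals $\{(x,x,a,b,a+b),(a,b,x,x,a+b): x,a,b\in\mathbb{K}, a\ne b\}$. A $(2,3)$-pole $T(B,C)$ is proper if $\varphi_*(B)\ne0$ and $\varphi_*(C)\ne0$ for every colouring; it is perfect (as a proper $(2,3)$-pole) if its colouring set on $(B,C)$ equals $\{(x_1,x_2,y_1,y_2,y_3)\in\mathbb{K}^5: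 x_1+x_2=y_1+y_2+y_3\ne0\}$. *)

theory Defs
  imports Main "HOL-Library.Z2" "HOL-Library.Product_Plus"
begin

type_synonym colour = "bit \<times> bit"

definition KK :: "colour set" where
  "KK = {(0,1), (1,0), (1,1)}"

text \<open>A multipole is given by its set of edge ends. Each end d has a partner end
  mate d (the other end of the same edge) and is either attached to a vertex
  (att d = Some v) or free (att d = None); a free end is a semiedge.
  The colour of an edge is the common colour of its two ends.\<close>

record ('d, 'v) mpole =
  verts :: "'v set"
  ends  :: "'d set"
  mate  :: "'d \<Rightarrow> 'd"
  att   :: "'d \<Rightarrow> 'v option"

definition ends_at :: "('d,'v) mpole \<Rightarrow> 'v \<Rightarrow> 'd set" where
  "ends_at M v = {d \<in> ends M. att M d = Some v}"

definition semiedges :: "('d,'v) mpole \<Rightarrow> 'd set" where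
  "semiedges M = {d \<in> ends M. att M d = None}"

definition mpole_wf :: "('d,'v) mpole \<Rightarrow> bool" where
  "mpole_wf M \<longleftrightarrow> finite (verts M) \<and> finite (ends M) \<and>
     (\<forall>d \<in> ends M. mate M d \<in> ends M \<and> mate M d \<noteq> d \<and> mate M (mate M d) = d) \<and>
     (\<forall>d \<in> ends M. \<forall>v. att M d = Some v \<longrightarrow> v \<in> verts M) \<and>
     (\<forall>v \<in> verts M. card (ends_at M v) = 3)"

definition colouring :: "('d,'v) mpole \<Rightarrow> ('d \<Rightarrow> colour) \<Rightarrow> bool" where
  "colouring M \<phi> \<longleftrightarrow>
     (\<forall>d \<in> ends M. \<phi> d \<in> KK \<and> \<phi> (mate M d) = \<phi> d) \<and>
     (\<forall>v \<in> verts M. inj_on \<phi> (ends_at M v))"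

definition adj :: "('d,'v) mpole \<Rightarrow> 'v \<Rightarrow> 'v \<Rightarrow> bool" where
  "adj G x y \<longleftrightarrow> (\<exists>d \<in> ends G. att G d = Some x \<and> att G (mate G d) = Some y)"

definition connected_mp :: "('d,'v) mpole \<Rightarrow> bool" where
  "connected_mp G \<longleftrightarrow> (\<forall>x \<in> verts G. \<forall>y \<in> verts G. (adj G)\<^sup>*\<^sup>* x y)"

definition snark :: "('d,'v) mpole \<Rightarrow> bool" where
  "snark G \<longleftrightarrow> mpole_wf G \<and> semiedges G = {} \<and> verts G \<noteq> {} \<and> connected_mp G \<and>
     \<not> (\<exists>\<phi>. colouring G \<phi>)"

definition Neg :: "('d,'v) mpole \<Rightarrow> 'v \<Rightarrow> 'v \<Rightarrow> 'v \<Rightarrow> ('d,'v) mpole" where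
  "Neg G u w v =
    \<lparr> verts = verts G - {u, w, v},
      ends = {d \<in> ends G. \<not> (att G d \<in> Some ` {u, w, v} \<and> att G (mate G d) \<in> Some ` {u, w, v})},
      mate = mate G,
      att = (\<lambda>d. if att G d \<in> Some ` {u, w, v} then None else att G d) \<rparr>"

definition is_negator :: "('d,'v) mpole \<Rightarrow> 'd \<Rightarrow> 'd \<Rightarrow> 'd \<Rightarrow> 'd \<Rightarrow> 'd \<Rightarrow> bool" where
  "is_negator N i1 i2 o1 o2 r \<longleftrightarrow>
     (\<exists>G u w v. snark G \<and> u \<in> verts G \<and> w \<in> verts G \<and> v \<in> verts G \<and>
        u \<noteq> w \<and> w \<noteq> v \<and> u \<noteq> v \<and> adj G u w \<and> adj G w v \<and>
        N = Neg G u w v \<and>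
        i1 \<noteq> i2 \<and> {d \<in> ends N. att G d = Some u} = {i1, i2} \<and>
        o1 \<noteq> o2 \<and> {d \<in> ends N. att G d = Some v} = {o1, o2} \<and>
        {d \<in> ends N. att G d = Some w} = {r})"

definition perfect_negator :: "('d,'v) mpole \<Rightarrow> 'd \<Rightarrow> 'd \<Rightarrow> 'd \<Rightarrow> 'd \<Rightarrow> 'd \<Rightarrow> bool" where
  "perfect_negator N i1 i2 o1 o2 r \<longleftrightarrow>
     {(\<phi> i1, \<phi> i2, \<phi> o1, \<phi> o2, \<phi> r) | \<phi>. colouring N \<phi>} =
     {(x, x, a, b, a + b) | x a b. x \<in> KK \<and> a \<in> KK \<and> b \<in> KK \<and> a \<noteq> b} \<union>
     {(a, b, x, x, a + b) | x a b. x \<in> KK \<and> a \<in> KK \<and> b \<in> KK \<and> a \<noteq> b}"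

definition is_23pole :: "('d,'v) mpole \<Rightarrow> 'd \<Rightarrow> 'd \<Rightarrow> 'd \<Rightarrow> 'd \<Rightarrow> 'd \<Rightarrow> bool" where
  "is_23pole T b1 b2 c1 c2 c3 \<longleftrightarrow> mpole_wf T \<and>
     distinct [b1, b2, c1, c2, c3] \<and> semiedges T = {b1, b2, c1, c2, c3}"

definition proper_23pole :: "('d,'v) mpole \<Rightarrow> 'd \<Rightarrow> 'd \<Rightarrow> 'd \<Rightarrow> 'd \<Rightarrow> 'd \<Rightarrow> bool" where
  "proper_23pole T b1 b2 c1 c2 c3 \<longleftrightarrow> is_23pole T b1 b2 c1 c2 c3 \<and>
     (\<forall>\<phi>. colouring T \<phi> \<longrightarrow> \<phi> b1 + \<phi> b2 \<noteq> 0 \<and> \<phi> c1 + \<phi> c2 + \<phi> c3 \<noteq> 0)"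

definition perfect_23pole :: "('d,'v) mpole \<Rightarrow> 'd \<Rightarrow> 'd \<Rightarrow> 'd \<Rightarrow> 'd \<Rightarrow> 'd \<Rightarrow> bool" where
  "perfect_23pole T b1 b2 c1 c2 c3 \<longleftrightarrow>
     {(\<phi> b1, \<phi> b2, \<phi> c1, \<phi> c2, \<phi> c3) | \<phi>. colouring T \<phi>} =
     {(x1, x2, y1, y2, y3) | x1 x2 y1 y2 y3.
        x1 \<in> KK \<and> x2 \<in> KK \<and> y1 \<in> KK \<and> y2 \<in> KK \<and> y3 \<in> KK \<and>
        x1 + x2 = y1 + y2 + y3 \<and> x1 + x2 \<noteq> 0}"

datatype ('a, 'b) ntend = NE 'a | TE 'b | Pn | Qn
datatype ('u, 'x) ntvert = NV 'u | TV 'x | Vn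

definition mp_sum :: "('a,'u) mpole \<Rightarrow> ('b,'x) mpole \<Rightarrow> (('a,'b) ntend, ('u,'x) ntvert) mpole" where
  "mp_sum N T =
    \<lparr> verts = NV ` verts N \<union> TV ` verts T,
      ends = NE ` ends N \<union> TE ` ends T,
      mate = (\<lambda>d. case d of NE a \<Rightarrow> NE (mate N a) | TE b \<Rightarrow> TE (mate T b) | Pn \<Rightarrow> Pn | Qn \<Rightarrow> Qn),
      att = (\<lambda>d. case d of NE a \<Rightarrow> map_option NV (att N a) | TE b \<Rightarrow> map_option TV (att T b)
                 | Pn \<Rightarrow> None | Qn \<Rightarrow> None) \<rparr>"

definition junction :: "('d,'v) mpole \<Rightarrow> 'd \<Rightarrow> 'd \<Rightarrow> ('d,'v) mpole" where
  "junction M x y = M\<lparr> ends := ends M - {x, y},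
     mate := (\<lambda>z. if z = mate M x then mate M y else if z = mate M y then mate M x else mate M z) \<rparr>"

text \<open>Subdivide the edge whose free end is c by the new vertex Vn (new ends Pn, Qn at Vn,
  Pn joined to the old partner of c, Qn joined to c), and attach the semiedge r to Vn.\<close>
definition subdiv_attach :: "(('a,'b) ntend, ('u,'x) ntvert) mpole \<Rightarrow> ('a,'b) ntend \<Rightarrow> ('a,'b) ntend
    \<Rightarrow> (('a,'b) ntend, ('u,'x) ntvert) mpole" where
  "subdiv_attach M c r = M\<lparr> verts := verts M \<union> {Vn},
     ends := ends M \<union> {Pn, Qn},
     mate := (mate M)(mate M c := Pn, Pn := mate M c, c := Qn, Qn := c),
     att := (att M)(Pn := Some Vn, Qn := Some Vn, r := Some Vn) \<rparr>"

definition NT :: "('a,'u) mpole \<Rightarrow> ('b,'x) mpole \<Rightarrow> 'a \<Rightarrow> 'a \<Rightarrow> 'a \<Rightarrow> 'b \<Rightarrow> 'b \<Rightarrow> 'b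
    \<Rightarrow> (('a,'b) ntend, ('u,'x) ntvert) mpole" where
  "NT N T o1 o2 r b1 b2 c3 =
     subdiv_attach (junction (junction (mp_sum N T) (NE o1) (TE b1)) (NE o2) (TE b2)) (TE c3) (NE r)"

end

theory Submission imports Defs begin
lemma addself[simp]: "(x::colour) + x = 0"
  by (cases x) (simp add: zero_prod_def)
lemma KK3: "x \<in> KK \<Longrightarrow> y \<in> KK \<Longrightarrow> z \<in> KK \<Longrightarrow> x \<noteq> y \<Longrightarrow> x \<noteq> z \<Longrightarrow> y \<noteq> z \<Longrightarrow> x + y + z = 0"
  unfolding KK_def by (auto simp: zero_prod_def)
lemma KKsum: "x \<in> KK \<Longrightarrow> y \<in> KK \<Longrightarrow> x \<noteq> y \<Longrightarrow> x + y \<in> KK \<and> x + y \<noteq> x \<and> x + y \<noteq> y"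
  unfolding KK_def by (auto simp: zero_prod_def)
lemma KKnz: "x \<in> KK \<Longrightarrow> x \<noteq> 0"
  unfolding KK_def by (auto simp: zero_prod_def)
lemma sumKK: "sum id KK = 0"
  unfolding KK_def by (simp add: zero_prod_def)
lemma cardKK: "card KK = 3"
  unfolding KK_def by simp

lemma pair_sum_zero:
  fixes \<phi> :: "'d \<Rightarrow> colour"
  shows "finite E \<Longrightarrow> (\<forall>d\<in>E. m d \<in> E \<and> m d \<noteq> d \<and> m (m d) = d) \<Longrightarrow> (\<forall>d\<in>E. \<phi> (m d) = \<phi> d)
     \<Longrightarrow> sum \<phi> E = 0"
proof (induction "card E" arbitrary: E rule: less_induct)
  case less
  show ?case
  proof (cases "E = {}")
    case True then show ?thesis by simp
  next
    case False
    then obtain d where d: "d \<in> E" by blast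
    define E' where "E' = E - {d, m d}"
    have md: "m d \<in> E" "m d \<noteq> d" "\<phi> (m d) = \<phi> d" using less.prems d by auto
    have cl: "\<forall>e\<in>E'. m e \<in> E' \<and> m e \<noteq> e \<and> m (m e) = e"
      using less.prems d unfolding E'_def by auto metis+
    have cE: "card E' < card E" unfolding E'_def using d less.prems(1)
      by (intro psubset_card_mono) auto
    have "sum \<phi> E' = 0" using less.hyps[OF cE] less.prems cl unfolding E'_def by auto
    moreover have "sum \<phi> E = \<phi> d + \<phi> (m d) + sum \<phi> E'"
    proof -
      have "E = insert d (insert (m d) E')" using d md unfolding E'_def by auto
      moreover have "d \<notin> insert (m d) E'" "m d \<notin> E'" using md unfolding E'_def by auto
      moreover have "finite E'" using less.prems(1) unfolding E'_def by simp
      ultimately show ?thesis by (simp add: add.assoc)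
    qed
    ultimately show ?thesis using md by simp
  qed
qed

lemma parity:
  assumes wf: "mpole_wf M" and col: "colouring M \<phi>"
  shows "sum \<phi> (semiedges M) = 0"
proof -
  have fin: "finite (ends M)" "finite (verts M)" using wf unfolding mpole_wf_def by auto
  have all: "sum \<phi> (ends M) = 0"
    apply (rule pair_sum_zero[where m="mate M"])
    using wf col unfolding mpole_wf_def colouring_def by auto
  have split: "ends M = semiedges M \<union> (\<Union>v\<in>verts M. ends_at M v)"
    using wf unfolding mpole_wf_def semiedges_def ends_at_def by (auto, metis not_None_eq)
  have disj: "semiedges M \<inter> (\<Union>v\<in>verts M. ends_at M v) = {}"
    unfolding semiedges_def ends_at_def by auto
  have vz: "sum \<phi> (ends_at M v) = 0" if v: "v \<in> verts M" for v
  proof -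
    have inj: "inj_on \<phi> (ends_at M v)" using col v unfolding colouring_def by auto
    have sub: "\<phi> ` ends_at M v \<subseteq> KK" using col unfolding colouring_def ends_at_def by auto
    have c3: "card (ends_at M v) = 3" using wf v unfolding mpole_wf_def by auto
    have "card (\<phi> ` ends_at M v) = 3" using card_image[OF inj] c3 by simp
    hence img: "\<phi> ` ends_at M v = KK"
      using sub cardKK by (metis card_subset_eq finite.emptyI finite.insertI KK_def)
    have "sum \<phi> (ends_at M v) = sum id (\<phi> ` ends_at M v)"
      using sum.reindex[OF inj, of id] by simp
    thus ?thesis using img sumKK by simp
  qed
  have "sum \<phi> (\<Union>v\<in>verts M. ends_at M v) = (\<Sum>v\<in>verts M. sum \<phi> (ends_at M v))"
    apply (rule sum.UNION_disjoint)
    using fin by (auto simp: ends_at_def)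
  also have "\<dots> = 0" using vz by simp
  finally have u0: "sum \<phi> (\<Union>v\<in>verts M. ends_at M v) = 0" .
  have "sum \<phi> (ends M) = sum \<phi> (semiedges M) + sum \<phi> (\<Union>v\<in>verts M. ends_at M v)"
    apply (subst split) apply (rule sum.union_disjoint)
    using fin disj by (auto simp: semiedges_def ends_at_def)
  thus ?thesis using all u0 by simp
qed
definition inv_ok :: "('d,'v) mpole \<Rightarrow> bool" where
  "inv_ok M \<longleftrightarrow> (\<forall>d\<in>ends M. mate M d \<in> ends M \<and> mate M d \<noteq> d \<and> mate M (mate M d) = d)"

lemma junction_simps[simp]:
  "ends (junction M x y) = ends M - {x, y}"
  "verts (junction M x y) = verts M"
  "att (junction M x y) = att M"
  "mate (junction M x y) z = (if z = mate M x then mate M y else if z = mate M y then mate M x else mate M z)"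
  unfolding junction_def by auto

lemma ends_at_junction:
  "att M x = None \<Longrightarrow> att M y = None \<Longrightarrow> ends_at (junction M x y) v = ends_at M v"
  unfolding ends_at_def by auto

lemma junction_inv:
  assumes "inv_ok M" "x \<in> ends M" "y \<in> ends M" "x \<noteq> y" "mate M x \<noteq> y"
  shows "inv_ok (junction M x y)"
  using assms unfolding inv_ok_def by (auto simp del: junction_simps simp add: junction_simps(1)) (auto, metis+)

lemma junction_back:
  assumes inv: "inv_ok M" and xy: "x \<in> ends M" "y \<in> ends M" "att M x = None" "att M y = None"
    "x \<noteq> y" "mate M x \<noteq> y" and col: "colouring (junction M x y) \<phi>"
  shows "\<exists>\<psi>. colouring M \<psi> \<and> \<psi> x = \<psi> y \<and> (\<forall>z. z \<noteq> x \<and> z \<noteq> y \<longrightarrow> \<psi> z = \<phi> z)"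
proof -
  define \<psi> where "\<psi> = \<phi>(x := \<phi> (mate M x), y := \<phi> (mate M y))"
  have mx: "mate M x \<in> ends M" "mate M x \<noteq> x" "mate M (mate M x) = x" "mate M x \<noteq> y"
    using inv xy unfolding inv_ok_def by auto
  have my: "mate M y \<in> ends M" "mate M y \<noteq> y" "mate M (mate M y) = y" "mate M y \<noteq> x"
    using inv xy mx unfolding inv_ok_def by metis+
  have mxy: "mate M x \<noteq> mate M y" using mx my xy by metis
  have c1: "\<forall>d\<in>ends M - {x,y}. \<phi> d \<in> KK \<and> \<phi> (mate (junction M x y) d) = \<phi> d"
    using col unfolding colouring_def by simp
  have eq: "\<phi> (mate M y) = \<phi> (mate M x)" using c1[rule_format, of "mate M x"] mx by simp
  have A: "\<forall>d\<in>ends M. \<psi> d \<in> KK \<and> \<psi> (mate M d) = \<psi> d"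
  proof
    fix d assume d: "d \<in> ends M"
    show "\<psi> d \<in> KK \<and> \<psi> (mate M d) = \<psi> d"
    proof (cases "d = x \<or> d = y")
      case True
      then show ?thesis using c1 mx my mxy eq xy unfolding \<psi>_def by auto
    next
      case False
      have md: "mate M d \<in> ends M" "mate M (mate M d) = d" using inv d unfolding inv_ok_def by auto
      show ?thesis
      proof (cases "mate M d = x \<or> mate M d = y")
        case True
        then show ?thesis using c1 mx my mxy eq xy False d md unfolding \<psi>_def by auto
      next
        case F2: False
        have "d \<noteq> mate M x" "d \<noteq> mate M y" using F2 mx my by auto
        then show ?thesis using c1[rule_format, of d] d False F2 unfolding \<psi>_def by auto
      qed
    qed
  qed
  have B: "\<forall>v\<in>verts M. inj_on \<psi> (ends_at M v)"
  proof
    fix v assume v: "v \<in> verts M"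
    have "inj_on \<phi> (ends_at M v)" using col v ends_at_junction[OF xy(3,4)] unfolding colouring_def by auto
    moreover have "\<forall>d\<in>ends_at M v. \<psi> d = \<phi> d" using xy unfolding \<psi>_def ends_at_def by auto
    ultimately show "inj_on \<psi> (ends_at M v)" using inj_on_cong by fastforce
  qed
  have "colouring M \<psi>" unfolding colouring_def using A B by blast
  moreover have "\<psi> x = \<psi> y" using eq xy unfolding \<psi>_def by simp
  ultimately show ?thesis unfolding \<psi>_def by auto
qed

lemma junction_fwd:
  assumes inv: "inv_ok M" and xy: "x \<in> ends M" "y \<in> ends M" "att M x = None" "att M y = None"
    "x \<noteq> y" "mate M x \<noteq> y" and col: "colouring M \<phi>" and eqxy: "\<phi> x = \<phi> y"
  shows "colouring (junction M x y) \<phi>"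
proof -
  have mx: "mate M x \<in> ends M" "mate M x \<noteq> x" "mate M (mate M x) = x" "mate M x \<noteq> y"
    using inv xy unfolding inv_ok_def by auto
  have my: "mate M y \<in> ends M" "mate M y \<noteq> y" "mate M (mate M y) = y" "mate M y \<noteq> x"
    using inv xy mx unfolding inv_ok_def by metis+
  have c: "\<forall>d\<in>ends M. \<phi> d \<in> KK \<and> \<phi> (mate M d) = \<phi> d" using col unfolding colouring_def by simp
  have e: "\<phi> (mate M x) = \<phi> (mate M y)" using c xy eqxy by metis
  have A: "\<forall>d \<in> ends (junction M x y). \<phi> d \<in> KK \<and> \<phi> (mate (junction M x y) d) = \<phi> d"
    using c e mx my by auto
  have B: "\<forall>v \<in> verts (junction M x y). inj_on \<phi> (ends_at (junction M x y) v)"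
      using col ends_at_junction[OF xy(3,4)] unfolding colouring_def by auto
  show ?thesis unfolding colouring_def using A B by blast
qed

lemma subdiv_simps[simp]:
  "verts (subdiv_attach M c r) = verts M \<union> {Vn}"
  "ends (subdiv_attach M c r) = ends M \<union> {Pn, Qn}"
  "mate (subdiv_attach M c r) = (mate M)(mate M c := Pn, Pn := mate M c, c := Qn, Qn := c)"
  "att (subdiv_attach M c r) = (att M)(Pn := Some Vn, Qn := Some Vn, r := Some Vn)"
  unfolding subdiv_attach_def by auto

locale SA =
  fixes M :: "(('a,'b) ntend, ('u,'x) ntvert) mpole" and c r
  assumes inv: "inv_ok M" and c: "c \<in> ends M" and r: "r \<in> ends M"
    and attc: "att M c = None" and attr: "att M r = None" and cr: "c \<noteq> r"
    and P: "Pn \<notin> ends M" and Q: "Qn \<notin> ends M" and V: "Vn \<notin> verts M"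
    and noV: "\<forall>d\<in>ends M. att M d \<noteq> Some Vn"
begin

lemma sa_basic: "mate M c \<in> ends M" "mate M c \<noteq> c" "mate M (mate M c) = c"
  "mate M c \<noteq> Pn" "mate M c \<noteq> Qn" "c \<noteq> Pn" "c \<noteq> Qn" "r \<noteq> Pn" "r \<noteq> Qn"
  using inv c r P Q unfolding inv_ok_def by auto

lemmas [simp] = sa_basic cr cr[symmetric] sa_basic(4-9)[symmetric]

lemma sa_info:
  assumes col: "colouring (subdiv_attach M c r) \<phi>"
  shows "\<phi> c = \<phi> Qn \<and> \<phi> Pn \<noteq> \<phi> Qn \<and> \<phi> Pn \<noteq> \<phi> r \<and> \<phi> Qn \<noteq> \<phi> r \<and>
         \<phi> Pn \<in> KK \<and> \<phi> Qn \<in> KK \<and> \<phi> r \<in> KK"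
proof -
  have cc: "\<forall>d\<in>ends M \<union> {Pn,Qn}. \<phi> d \<in> KK \<and> \<phi> (((mate M)(mate M c := Pn, Pn := mate M c, c := Qn, Qn := c)) d) = \<phi> d"
    using col unfolding colouring_def by simp
  have e1: "\<phi> c = \<phi> Qn" using cc c sa_basic by auto
  have sub: "{Pn, Qn, r} \<subseteq> ends_at (subdiv_attach M c r) Vn" using r unfolding ends_at_def by auto
  have "inj_on \<phi> (ends_at (subdiv_attach M c r) Vn)" using col unfolding colouring_def by simp
  hence "inj_on \<phi> {Pn, Qn, r}" using inj_on_subset sub by blast
  hence "\<phi> Pn \<noteq> \<phi> Qn \<and> \<phi> Pn \<noteq> \<phi> r \<and> \<phi> Qn \<noteq> \<phi> r" using sa_basic by (auto simp: inj_on_def)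
  moreover have "\<phi> Pn \<in> KK \<and> \<phi> Qn \<in> KK \<and> \<phi> r \<in> KK" using cc r by auto
  ultimately show ?thesis using e1 by simp
qed

lemma sa_back:
  assumes col: "colouring (subdiv_attach M c r) \<phi>"
  shows "\<exists>\<psi>. colouring M \<psi> \<and> \<psi> c = \<phi> Pn \<and> (\<forall>z. z \<noteq> c \<longrightarrow> \<psi> z = \<phi> z)"
proof -
  define \<psi> where "\<psi> = \<phi>(c := \<phi> Pn)"
  have cc: "\<forall>d\<in>ends M \<union> {Pn,Qn}. \<phi> d \<in> KK \<and> \<phi> (((mate M)(mate M c := Pn, Pn := mate M c, c := Qn, Qn := c)) d) = \<phi> d"
    using col unfolding colouring_def by simp
  have A: "\<forall>d\<in>ends M. \<psi> d \<in> KK \<and> \<psi> (mate M d) = \<psi> d"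
  proof
    fix d assume d: "d \<in> ends M"
    have md: "mate M d \<in> ends M" "mate M (mate M d) = d" "mate M d \<noteq> d" using inv d unfolding inv_ok_def by auto
    show "\<psi> d \<in> KK \<and> \<psi> (mate M d) = \<psi> d"
    proof (cases "d = c \<or> d = mate M c")
      case True
      then show ?thesis using cc[rule_format, of "mate M c"] cc[rule_format, of Pn] sa_basic
        unfolding \<psi>_def by auto
    next
      case False
      have "mate M d \<noteq> c" using False md by auto
      moreover have "d \<noteq> Pn" "d \<noteq> Qn" using d P Q by auto
      ultimately show ?thesis using cc[rule_format, of d] d False unfolding \<psi>_def by auto
    qed
  qed
  have B: "\<forall>v\<in>verts M. inj_on \<psi> (ends_at M v)"
  proof
    fix v assume v: "v \<in> verts M"
    have sub: "ends_at M v \<subseteq> ends_at (subdiv_attach M c r) v"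
      using v V attr P Q unfolding ends_at_def by auto
    have "inj_on \<phi> (ends_at (subdiv_attach M c r) v)" using col v unfolding colouring_def by simp
    hence "inj_on \<phi> (ends_at M v)" using inj_on_subset sub by blast
    moreover have "\<forall>d\<in>ends_at M v. \<psi> d = \<phi> d" using attc unfolding \<psi>_def ends_at_def by auto
    ultimately show "inj_on \<psi> (ends_at M v)" using inj_on_cong by fastforce
  qed
  have "colouring M \<psi>" unfolding colouring_def using A B by blast
  then show ?thesis unfolding \<psi>_def by auto
qed

lemma sa_fwd:
  assumes col: "colouring M \<psi>" and q: "q \<in> KK" "\<psi> c \<noteq> q" "\<psi> c \<noteq> \<psi> r" "q \<noteq> \<psi> r"
  shows "colouring (subdiv_attach M c r) (\<psi>(Pn := \<psi> c, Qn := q, c := q))"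
proof -
  define \<phi> where "\<phi> = \<psi>(Pn := \<psi> c, Qn := q, c := q)"
  have cc: "\<forall>d\<in>ends M. \<psi> d \<in> KK \<and> \<psi> (mate M d) = \<psi> d" using col unfolding colouring_def by simp
  have A: "\<forall>d\<in>ends (subdiv_attach M c r). \<phi> d \<in> KK \<and> \<phi> (mate (subdiv_attach M c r) d) = \<phi> d"
  proof
    fix d assume d: "d \<in> ends (subdiv_attach M c r)"
    show "\<phi> d \<in> KK \<and> \<phi> (mate (subdiv_attach M c r) d) = \<phi> d"
    proof (cases "d \<in> {Pn, Qn, c, mate M c}")
      case True
      have k: "\<psi> c \<in> KK" "\<psi> (mate M c) = \<psi> c" using cc c by auto
      have "d = Pn \<or> d = Qn \<or> d = c \<or> d = mate M c" using True by simp
      then show ?thesis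
      proof (elim disjE)
        assume "d = Pn" then show ?thesis using k sa_basic unfolding \<phi>_def by simp
      next
        assume "d = Qn" then show ?thesis using k sa_basic q unfolding \<phi>_def by simp
      next
        assume "d = c" then show ?thesis using k sa_basic q unfolding \<phi>_def by simp
      next
        assume "d = mate M c" then show ?thesis using k sa_basic q unfolding \<phi>_def by simp
      qed
    next
      case False
      hence dM: "d \<in> ends M" using d by auto
      have md: "mate M d \<in> ends M" "mate M (mate M d) = d" using inv dM unfolding inv_ok_def by auto
      have m3: "mate M d \<noteq> c" "mate M d \<noteq> Pn" "mate M d \<noteq> Qn" using False md P Q by auto
      have "d \<noteq> Pn" "d \<noteq> Qn" "d \<noteq> c" "d \<noteq> mate M c" using False by auto
      then show ?thesis using cc[rule_format, of d] dM m3 unfolding \<phi>_def by simp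
    qed
  qed
  have B: "\<forall>v\<in>verts (subdiv_attach M c r). inj_on \<phi> (ends_at (subdiv_attach M c r) v)"
  proof
    fix v assume v: "v \<in> verts (subdiv_attach M c r)"
    show "inj_on \<phi> (ends_at (subdiv_attach M c r) v)"
    proof (cases "v = Vn")
      case True
      have sub: "ends_at (subdiv_attach M c r) v \<subseteq> {Pn, Qn, r}"
      proof
        fix d assume d: "d \<in> ends_at (subdiv_attach M c r) v"
        show "d \<in> {Pn, Qn, r}"
        proof (rule ccontr)
          assume n: "d \<notin> {Pn, Qn, r}"
          hence "d \<in> ends M" "att M d = Some Vn" using d True unfolding ends_at_def by auto
          then show False using noV by blast
        qed
      qed
      have e: "\<phi> Pn = \<psi> c" "\<phi> Qn = q" "\<phi> r = \<psi> r" using sa_basic cr unfolding \<phi>_def by simp_all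
      have "inj_on \<phi> {Pn, Qn, r}" using q sa_basic e by (simp add: inj_on_insert)
      then show ?thesis by (rule inj_on_subset[OF _ sub])
    next
      case False
      hence vM: "v \<in> verts M" using v by auto
      have sub: "ends_at (subdiv_attach M c r) v \<subseteq> ends_at M v"
      proof
        fix d assume d: "d \<in> ends_at (subdiv_attach M c r) v"
        have "d \<noteq> Pn" "d \<noteq> Qn" "d \<noteq> r" using d False unfolding ends_at_def by auto
        then show "d \<in> ends_at M v" using d unfolding ends_at_def by simp
      qed
      have "inj_on \<psi> (ends_at M v)" using col vM unfolding colouring_def by simp
      moreover have "\<forall>d\<in>ends_at M v. \<phi> d = \<psi> d"
      proof
        fix d assume "d \<in> ends_at M v"
        hence "d \<noteq> Pn" "d \<noteq> Qn" "d \<noteq> c" using attc P Q unfolding ends_at_def by auto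
        then show "\<phi> d = \<psi> d" unfolding \<phi>_def by simp
      qed
      ultimately have "inj_on \<phi> (ends_at M v)" using inj_on_cong by fastforce
      then show ?thesis using inj_on_subset sub by blast
    qed
  qed
  show ?thesis unfolding colouring_def \<phi>_def[symmetric] using A B by blast
qed

end

lemma ms_simps[simp]:
  "verts (mp_sum N T) = NV ` verts N \<union> TV ` verts T"
  "ends (mp_sum N T) = NE ` ends N \<union> TE ` ends T"
  "mate (mp_sum N T) (NE a) = NE (mate N a)"
  "mate (mp_sum N T) (TE b) = TE (mate T b)"
  "att (mp_sum N T) (NE a) = map_option NV (att N a)"
  "att (mp_sum N T) (TE b) = map_option TV (att T b)"
  unfolding mp_sum_def by auto

lemma ms_ends_at:
  "ends_at (mp_sum N T) (NV v) = NE ` ends_at N v"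
  "ends_at (mp_sum N T) (TV w) = TE ` ends_at T w"
  unfolding ends_at_def by auto

lemma ms_inv: "inv_ok N \<Longrightarrow> inv_ok T \<Longrightarrow> inv_ok (mp_sum N T)"
  unfolding inv_ok_def by auto

lemma ms_back:
  assumes col: "colouring (mp_sum N T) \<phi>"
  shows "colouring N (\<phi> \<circ> NE) \<and> colouring T (\<phi> \<circ> TE)"
proof -
  have cc: "\<forall>d\<in>ends (mp_sum N T). \<phi> d \<in> KK \<and> \<phi> (mate (mp_sum N T) d) = \<phi> d"
   and ci: "\<forall>v\<in>verts (mp_sum N T). inj_on \<phi> (ends_at (mp_sum N T) v)"
    using col unfolding colouring_def by auto
  have "inj_on (\<phi> \<circ> NE) (ends_at N v)" if "v \<in> verts N" for v
    using ci[rule_format, of "NV v"] that by (simp add: ms_ends_at inj_on_def)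
  moreover have "inj_on (\<phi> \<circ> TE) (ends_at T v)" if "v \<in> verts T" for v
    using ci[rule_format, of "TV v"] that by (simp add: ms_ends_at inj_on_def)
  moreover have "\<phi> (NE a) \<in> KK \<and> \<phi> (NE (mate N a)) = \<phi> (NE a)" if "a \<in> ends N" for a
    using cc[rule_format, of "NE a"] that by simp
  moreover have "\<phi> (TE a) \<in> KK \<and> \<phi> (TE (mate T a)) = \<phi> (TE a)" if "a \<in> ends T" for a
    using cc[rule_format, of "TE a"] that by simp
  ultimately show ?thesis unfolding colouring_def by auto
qed

lemma ms_fwd:
  assumes "colouring N f" "colouring T g"
  shows "colouring (mp_sum N T) (case_ntend f g p q)"
proof -
  have "inj_on (case_ntend f g p q) (ends_at (mp_sum N T) v)" if "v \<in> verts (mp_sum N T)" for v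
    using that assms unfolding colouring_def by (auto simp: ms_ends_at inj_on_def)
  then show ?thesis using assms unfolding colouring_def by auto
qed

lemma addself2[simp]: "(x::colour) + (x + y) = y"
  by (simp add: add.assoc[symmetric])
lemma sum0_eq: "(x::colour) + y = 0 \<Longrightarrow> x = y"
proof -
  assume h: "x + y = 0"
  have "x = x + (y + y)" by simp
  also have "\<dots> = (x + y) + y" by (simp add: add.assoc)
  also have "\<dots> = y" using h by simp
  finally show ?thesis .
qed
lemma eq_sum0: "((x::colour) = y) \<longleftrightarrow> x + y = 0"
  by (metis sum0_eq addself)

lemma wf_inv: "mpole_wf M \<Longrightarrow> inv_ok M"
  unfolding mpole_wf_def inv_ok_def by auto

locale NEG =
  fixes G :: "('d,'v) mpole" and u w v i1 i2 o1 o2 r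
  assumes sn: "snark G" and uwv: "u \<in> verts G" "w \<in> verts G" "v \<in> verts G"
    "u \<noteq> w" "w \<noteq> v" "u \<noteq> v" and adj1: "adj G u w" and adj2: "adj G w v"
    and i12: "i1 \<noteq> i2" and Iset: "{d \<in> ends (Neg G u w v). att G d = Some u} = {i1, i2}"
    and o12: "o1 \<noteq> o2" and Oset: "{d \<in> ends (Neg G u w v). att G d = Some v} = {o1, o2}"
    and Rset: "{d \<in> ends (Neg G u w v). att G d = Some w} = {r}"
begin

abbreviation "N \<equiv> Neg G u w v"

lemma wfG: "mpole_wf G" and semG: "semiedges G = {}" and noncol: "\<not> (\<exists>\<phi>. colouring G \<phi>)"
  using sn unfolding snark_def by auto

lemma G_att: "d \<in> ends G \<Longrightarrow> \<exists>x. att G d = Some x \<and> x \<in> verts G"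
  using wfG semG unfolding mpole_wf_def semiedges_def by (cases "att G d") auto

lemma G_att_ne: "d \<in> ends G \<Longrightarrow> att G d \<noteq> None"
  using G_att by fastforce

lemma G_mate: "d \<in> ends G \<Longrightarrow> mate G d \<in> ends G \<and> mate G d \<noteq> d \<and> mate G (mate G d) = d"
  using wfG unfolding mpole_wf_def by auto

lemma N_simps:
  "verts N = verts G - {u, w, v}"
  "ends N = {d \<in> ends G. \<not> (att G d \<in> Some ` {u, w, v} \<and> att G (mate G d) \<in> Some ` {u, w, v})}"
  "mate N = mate G"
  "att N = (\<lambda>d. if att G d \<in> Some ` {u, w, v} then None else att G d)"
  unfolding Neg_def by auto

lemma ends_at_N: "x \<in> verts N \<Longrightarrow> ends_at N x = ends_at G x"
  unfolding ends_at_def N_simps by auto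

lemma wfN: "mpole_wf N"
proof -
  have fin: "finite (verts G)" "finite (ends G)" using wfG unfolding mpole_wf_def by auto
  have m: "\<forall>d\<in>ends N. mate N d \<in> ends N \<and> mate N d \<noteq> d \<and> mate N (mate N d) = d"
    unfolding N_simps using G_mate by auto
  have a: "\<forall>d\<in>ends N. \<forall>x. att N d = Some x \<longrightarrow> x \<in> verts N"
  proof (intro ballI allI impI)
    fix d x assume d: "d \<in> ends N" and x: "att N d = Some x"
    have dG: "d \<in> ends G" using d unfolding N_simps by auto
    have "att G d \<notin> Some ` {u, w, v}" "att G d = Some x" using x unfolding N_simps by (auto split: if_splits)
    then show "x \<in> verts N" using G_att[OF dG] unfolding N_simps by auto
  qed
  have c: "\<forall>x\<in>verts N. card (ends_at N x) = 3"
    using ends_at_N wfG N_simps(1) unfolding mpole_wf_def by auto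
  show ?thesis unfolding mpole_wf_def using fin m a c by (auto simp: N_simps)
qed

lemma memb: "i1 \<in> ends N" "i2 \<in> ends N" "o1 \<in> ends N" "o2 \<in> ends N" "r \<in> ends N"
  "att G i1 = Some u" "att G i2 = Some u" "att G o1 = Some v" "att G o2 = Some v" "att G r = Some w"
  using Iset Oset Rset by blast+

lemma distinct5: "distinct [i1, i2, o1, o2, r]"
  using memb i12 o12 uwv by auto

lemma semN: "semiedges N = {i1, i2, o1, o2, r}"
proof -
  have "semiedges N = {d \<in> ends N. att G d \<in> Some ` {u, w, v}}"
    unfolding semiedges_def N_simps by (auto dest: G_att_ne)
  also have "\<dots> = {d \<in> ends N. att G d = Some u} \<union> {d \<in> ends N. att G d = Some v} \<union> {d \<in> ends N. att G d = Some w}"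
    by auto
  finally show ?thesis using Iset Oset Rset by auto
qed

lemma attN: "att N i1 = None" "att N i2 = None" "att N o1 = None" "att N o2 = None" "att N r = None"
  using semN unfolding semiedges_def by auto

lemma mate_o1: "mate N o1 \<noteq> o2"
  using memb unfolding N_simps by auto

lemma parityN: "colouring N \<psi> \<Longrightarrow> \<psi> i1 + \<psi> i2 + \<psi> o1 + \<psi> o2 + \<psi> r = 0"
  using parity[OF wfN, of \<psi>] semN distinct5 by (simp add: add.assoc)


lemma three_set:
  assumes "finite A" "card A = 3" "{a, b, c} \<subseteq> A" "a \<noteq> b" "a \<noteq> c" "b \<noteq> c"
  shows "A = {a, b, c}"
proof -
  have "card {a, b, c} = 3" using assms by simp
  then show ?thesis using card_subset_eq[OF assms(1) assms(3)] assms(2) by simp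
qed

lemma inj3: "f a \<noteq> f b \<Longrightarrow> f a \<noteq> f c \<Longrightarrow> f b \<noteq> f c \<Longrightarrow> inj_on f {a, b, c}"
  by (auto simp: inj_on_def)

lemma neg_key:
  assumes col: "colouring N \<psi>" and ni: "\<psi> i1 \<noteq> \<psi> i2" and no: "\<psi> o1 \<noteq> \<psi> o2"
  shows False
proof -
  obtain d1 where d1: "d1 \<in> ends G" "att G d1 = Some u" "att G (mate G d1) = Some w"
    using adj1 unfolding adj_def by blast
  obtain d2 where d2: "d2 \<in> ends G" "att G d2 = Some w" "att G (mate G d2) = Some v"
    using adj2 unfolding adj_def by blast
  define e1 where "e1 = mate G d1"
  define e2 where "e2 = mate G d2"
  have e1: "e1 \<in> ends G" "mate G e1 = d1" "att G e1 = Some w" using G_mate[OF d1(1)] d1 unfolding e1_def by auto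
  have e2: "e2 \<in> ends G" "mate G e2 = d2" "att G e2 = Some v" using G_mate[OF d2(1)] d2 unfolding e2_def by auto
  have finG: "finite (ends G)" using wfG unfolding mpole_wf_def by auto
  have c3: "\<And>x. x \<in> verts G \<Longrightarrow> card (ends_at G x) = 3" using wfG unfolding mpole_wf_def by auto
  have fin_at: "\<And>x. finite (ends_at G x)" using finG unfolding ends_at_def by auto
  have notN: "d1 \<notin> ends N" "e1 \<notin> ends N" "d2 \<notin> ends N" "e2 \<notin> ends N"
    unfolding N_simps using d1 d2 e1 e2 unfolding e1_def e2_def by auto
  have memG: "i1 \<in> ends G" "i2 \<in> ends G" "o1 \<in> ends G" "o2 \<in> ends G" "r \<in> ends G"
    using memb unfolding N_simps by auto
  have dist: "d1 \<noteq> e1" "d1 \<noteq> d2" "d1 \<noteq> e2" "e1 \<noteq> d2" "e1 \<noteq> e2" "d2 \<noteq> e2"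
  proof -
    show "d1 \<noteq> e1" using d1 e1 uwv by auto
    show "d1 \<noteq> d2" using d1 d2 uwv by auto
    show "d1 \<noteq> e2" using d1 e2 uwv by auto
    show "e1 \<noteq> d2" using d1 d2 e1 uwv by (metis option.inject)
    show "e1 \<noteq> e2" using e1 e2 uwv by auto
    show "d2 \<noteq> e2" using d2 e2 uwv by auto
  qed
  have atu: "ends_at G u = {i1, i2, d1}"
    apply (rule three_set[OF fin_at c3[OF uwv(1)]])
    using memG memb d1 i12 notN unfolding ends_at_def by auto
  have atv: "ends_at G v = {o1, o2, e2}"
    apply (rule three_set[OF fin_at c3[OF uwv(3)]])
    using memG memb e2 o12 notN unfolding ends_at_def by auto
  have atw: "ends_at G w = {r, e1, d2}"
    apply (rule three_set[OF fin_at c3[OF uwv(2)]])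
    using memG memb e1 d2 dist notN unfolding ends_at_def by auto
  have cN: "\<And>d. d \<in> ends N \<Longrightarrow> \<psi> d \<in> KK \<and> \<psi> (mate G d) = \<psi> d"
    using col unfolding colouring_def N_simps(3) by auto
  have KKv: "\<psi> i1 \<in> KK" "\<psi> i2 \<in> KK" "\<psi> o1 \<in> KK" "\<psi> o2 \<in> KK" "\<psi> r \<in> KK"
    using cN memb by auto
  define s where "s = \<psi> i1 + \<psi> i2"
  define t where "t = \<psi> o1 + \<psi> o2"
  have s: "s \<in> KK" "s \<noteq> \<psi> i1" "s \<noteq> \<psi> i2" using KKsum[OF KKv(1,2) ni] unfolding s_def by auto
  have t: "t \<in> KK" "t \<noteq> \<psi> o1" "t \<noteq> \<psi> o2" using KKsum[OF KKv(3,4) no] unfolding t_def by auto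
  have "(s + t) + \<psi> r = 0"
    using parityN[OF col] unfolding s_def t_def by (simp add: add.assoc)
  hence pr: "\<psi> r = s + t" using sum0_eq by metis
  have st: "s \<noteq> t" using pr KKnz[OF KKv(5)] by auto
  have "t = s + \<psi> r" using pr by simp
  hence rs: "\<psi> r \<noteq> s" using KKnz[OF t(1)] by auto
  have "s = \<psi> r + t" using pr by (simp add: add.assoc)
  hence rt: "\<psi> r \<noteq> t" using KKnz[OF s(1)] by auto
  define \<chi> where "\<chi> d = (if d = d1 \<or> d = e1 then s else if d = d2 \<or> d = e2 then t else \<psi> d)" for d
  have inN: "d \<in> ends N" if d: "d \<in> ends G" "d \<notin> {d1, e1, d2, e2}" for d
  proof (rule ccontr)
    assume n: "d \<notin> ends N"
    hence "att G d \<in> Some ` {u, w, v}" using d unfolding N_simps by auto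
    then obtain x where x: "x \<in> {u, w, v}" "d \<in> ends_at G x" using d unfolding ends_at_def by auto
    hence "d \<in> {i1, i2, o1, o2, r}" using atu atv atw d(2) by auto
    then show False using n memb by auto
  qed
  have chiN: "\<chi> d = \<psi> d" if "d \<in> ends N" for d
  proof -
    have "d \<noteq> d1" "d \<noteq> e1" "d \<noteq> d2" "d \<noteq> e2" using that notN by auto
    then show ?thesis unfolding \<chi>_def by simp
  qed
  have A: "\<forall>d\<in>ends G. \<chi> d \<in> KK \<and> \<chi> (mate G d) = \<chi> d"
  proof
    fix d assume d: "d \<in> ends G"
    show "\<chi> d \<in> KK \<and> \<chi> (mate G d) = \<chi> d"
    proof (cases "d \<in> {d1, e1, d2, e2}")
      case True
      have m1: "mate G d1 = e1" "mate G d2 = e2" unfolding e1_def e2_def by simp_all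
      have v: "\<chi> d1 = s" "\<chi> e1 = s" "\<chi> d2 = t" "\<chi> e2 = t" using dist unfolding \<chi>_def by auto
      from True consider "d = d1" | "d = e1" | "d = d2" | "d = e2" by blast
      then show ?thesis
        by cases (simp_all only: m1 e1(2) e2(2) v s(1) t(1) simp_thms)
    next
      case False
      have dN: "d \<in> ends N" using inN d False by auto
      have mN: "mate G d \<in> ends N" using wfN dN unfolding mpole_wf_def N_simps(3) by auto
      show ?thesis using chiN[OF dN] chiN[OF mN] cN[OF dN] by simp
    qed
  qed
  have B: "\<forall>x\<in>verts G. inj_on \<chi> (ends_at G x)"
  proof
    fix x assume x: "x \<in> verts G"
    consider "x = u" | "x = v" | "x = w" | "x \<notin> {u, v, w}" by auto
    then show "inj_on \<chi> (ends_at G x)"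
    proof cases
      case 1
      have "\<chi> i1 = \<psi> i1" "\<chi> i2 = \<psi> i2" "\<chi> d1 = s" using chiN memb unfolding \<chi>_def by auto
      then show ?thesis unfolding 1 atu using ni s by (intro inj3) auto
    next
      case 2
      have "\<chi> o1 = \<psi> o1" "\<chi> o2 = \<psi> o2" "\<chi> e2 = t" using chiN memb dist unfolding \<chi>_def by auto
      then show ?thesis unfolding 2 atv using no t by (intro inj3) auto
    next
      case 3
      have "\<chi> r = \<psi> r" "\<chi> e1 = s" "\<chi> d2 = t" using chiN memb dist unfolding \<chi>_def by auto
      then show ?thesis unfolding 3 atw using rs rt st by (intro inj3) auto
    next
      case 4
      have xN: "x \<in> verts N" using x 4 unfolding N_simps by auto
      have "inj_on \<psi> (ends_at N x)" using col xN unfolding colouring_def by auto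
      moreover have "\<forall>d\<in>ends_at N x. \<chi> d = \<psi> d" using chiN unfolding ends_at_def by auto
      ultimately show ?thesis using ends_at_N[OF xN] inj_on_cong by metis
    qed
  qed
  have "colouring G \<chi>" unfolding colouring_def using A B by blast
  then show False using noncol by blast
qed

end



lemma alg: "x1 + x2 + r = (0::colour) \<Longrightarrow> x1 + x2 + y1 + y2 + p = 0 \<Longrightarrow> p + q + r = 0 \<Longrightarrow> y1 + y2 + q = 0"
proof -
  assume h: "x1 + x2 + r = (0::colour)" "x1 + x2 + y1 + y2 + p = 0" "p + q + r = 0"
  have "y1 + y2 + q = (x1 + x2 + r) + (x1 + x2 + y1 + y2 + p) + (p + q + r)" by (simp add: add_ac)
  then show ?thesis using h by simp
qed
lemma other: "c \<in> KK \<Longrightarrow> \<exists>c'\<in>KK. c' \<noteq> c" unfolding KK_def by auto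

theorem mainTheorem4:
  fixes N :: "('a,'u) mpole" and T :: "('b,'x) mpole"
    and i1 i2 o1 o2 r :: 'a and b1 b2 c1 c2 c3 :: 'b
  assumes "is_negator N i1 i2 o1 o2 r"
    and "proper_23pole T b1 b2 c1 c2 c3"
  shows "(\<forall>\<phi>. colouring (NT N T o1 o2 r b1 b2 c3) \<phi> \<longrightarrow>
            \<phi> (NE i1) = \<phi> (NE i2) \<and> \<phi> (TE c1) + \<phi> (TE c2) + \<phi> (TE c3) = 0)
       \<and> (perfect_negator N i1 i2 o1 o2 r \<and> perfect_23pole T b1 b2 c1 c2 c3 \<longrightarrow>
            (\<forall>x\<in>KK. \<forall>a\<in>KK. \<forall>b\<in>KK. \<forall>c\<in>KK. a + b + c = 0 \<longrightarrow>
              (\<exists>\<phi>. colouring (NT N T o1 o2 r b1 b2 c3) \<phi> \<and>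
                 \<phi> (NE i1) = x \<and> \<phi> (NE i2) = x \<and>
                 \<phi> (TE c1) = a \<and> \<phi> (TE c2) = b \<and> \<phi> (TE c3) = c)))"
proof -
  obtain G u w v where GN: "snark G" "u \<in> verts G" "w \<in> verts G" "v \<in> verts G"
        "u \<noteq> w" "w \<noteq> v" "u \<noteq> v" "adj G u w" "adj G w v" and NN: "N = Neg G u w v" and
        rest: "i1 \<noteq> i2" "{d \<in> ends N. att G d = Some u} = {i1, i2}"
        "o1 \<noteq> o2" "{d \<in> ends N. att G d = Some v} = {o1, o2}"
        "{d \<in> ends N. att G d = Some w} = {r}"
    using assms(1) unfolding is_negator_def by blast
  have neg: "NEG G u w v i1 i2 o1 o2 r"
    unfolding NEG_def using GN rest NN by blast
  have wfN: "mpole_wf N" using NEG.wfN[OF neg] NN by simp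
  have semN: "semiedges N = {i1, i2, o1, o2, r}" using NEG.semN[OF neg] NN by simp
  have d5: "distinct [i1, i2, o1, o2, r]" using NEG.distinct5[OF neg] .
  have mo1: "mate N o1 \<noteq> o2" using NEG.mate_o1[OF neg] NN by simp
  have parN: "\<And>\<psi>. colouring N \<psi> \<Longrightarrow> \<psi> i1 + \<psi> i2 + \<psi> o1 + \<psi> o2 + \<psi> r = 0"
    using NEG.parityN[OF neg] NN by simp
  have keyN: "\<And>\<psi>. colouring N \<psi> \<Longrightarrow> \<psi> i1 \<noteq> \<psi> i2 \<Longrightarrow> \<psi> o1 \<noteq> \<psi> o2 \<Longrightarrow> False"
    using NEG.neg_key[OF neg] NN by blast
  have wfT: "mpole_wf T" and d5T: "distinct [b1, b2, c1, c2, c3]"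
    and semT: "semiedges T = {b1, b2, c1, c2, c3}"
    and propT: "\<And>\<phi>. colouring T \<phi> \<Longrightarrow> \<phi> b1 + \<phi> b2 \<noteq> 0"
    using assms(2) unfolding proper_23pole_def is_23pole_def by auto
  have eN: "i1 \<in> ends N" "i2 \<in> ends N" "o1 \<in> ends N" "o2 \<in> ends N" "r \<in> ends N"
    and aN: "att N i1 = None" "att N i2 = None" "att N o1 = None" "att N o2 = None" "att N r = None"
    using semN unfolding semiedges_def by blast+
  have eT: "b1 \<in> ends T" "b2 \<in> ends T" "c1 \<in> ends T" "c2 \<in> ends T" "c3 \<in> ends T"
    and aT: "att T b1 = None" "att T b2 = None" "att T c1 = None" "att T c2 = None" "att T c3 = None"
    using semT unfolding semiedges_def by blast+
  have invN: "inv_ok N" using wfN by (rule wf_inv)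
  have invT: "inv_ok T" using wfT by (rule wf_inv)
  have mNo1: "mate N o1 \<noteq> o1" using invN eN unfolding inv_ok_def by auto
  define M0 where "M0 = mp_sum N T"
  define M1 where "M1 = junction M0 (NE o1) (TE b1)"
  define M2 where "M2 = junction M1 (NE o2) (TE b2)"
  have M3: "NT N T o1 o2 r b1 b2 c3 = subdiv_attach M2 (TE c3) (NE r)"
    unfolding NT_def M0_def M1_def M2_def ..
  have inv0: "inv_ok M0" unfolding M0_def using invN invT by (rule ms_inv)
  have J1: "NE o1 \<in> ends M0" "TE b1 \<in> ends M0" "att M0 (NE o1) = None" "att M0 (TE b1) = None"
     "NE o1 \<noteq> TE b1" "mate M0 (NE o1) \<noteq> TE b1"
    unfolding M0_def using eN eT aN aT by auto
  have inv1: "inv_ok M1" unfolding M1_def using junction_inv[OF inv0 J1(1,2,5,6)] .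
  have J2: "NE o2 \<in> ends M1" "TE b2 \<in> ends M1" "att M1 (NE o2) = None" "att M1 (TE b2) = None"
     "NE o2 \<noteq> TE b2" "mate M1 (NE o2) \<noteq> TE b2"
    unfolding M1_def M0_def using eN eT aN aT d5 d5T mo1 by auto
  have inv2: "inv_ok M2" unfolding M2_def using junction_inv[OF inv1 J2(1,2,5,6)] .
  have sa: "SA M2 (TE c3) (NE r)"
    unfolding SA_def M2_def M1_def M0_def
    using inv2 eN eT aN aT d5 d5T unfolding M2_def M1_def M0_def by auto
  have part1: "\<phi> (NE i1) = \<phi> (NE i2) \<and> \<phi> (TE c1) + \<phi> (TE c2) + \<phi> (TE c3) = 0"
    if col: "colouring (NT N T o1 o2 r b1 b2 c3) \<phi>" for \<phi>
  proof -
    have col3: "colouring (subdiv_attach M2 (TE c3) (NE r)) \<phi>" using col M3 by simp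
    note inf = SA.sa_info[OF sa col3]
    obtain \<psi>2 where p2: "colouring M2 \<psi>2" "\<psi>2 (TE c3) = \<phi> Pn" "\<forall>z. z \<noteq> TE c3 \<longrightarrow> \<psi>2 z = \<phi> z"
      using SA.sa_back[OF sa col3] by blast
    obtain \<psi>1 where p1: "colouring M1 \<psi>1" "\<psi>1 (NE o2) = \<psi>1 (TE b2)"
        "\<forall>z. z \<noteq> NE o2 \<and> z \<noteq> TE b2 \<longrightarrow> \<psi>1 z = \<psi>2 z"
      using junction_back[OF inv1 J2 p2(1)[unfolded M2_def]] by blast
    obtain \<psi>0 where p0: "colouring M0 \<psi>0" "\<psi>0 (NE o1) = \<psi>0 (TE b1)"
        "\<forall>z. z \<noteq> NE o1 \<and> z \<noteq> TE b1 \<longrightarrow> \<psi>0 z = \<psi>1 z"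
      using junction_back[OF inv0 J1 p1(1)[unfolded M1_def]] by blast
    have cN: "colouring N (\<psi>0 \<circ> NE)" and cT: "colouring T (\<psi>0 \<circ> TE)"
      using ms_back[OF p0(1)[unfolded M0_def]] by auto
    have v1: "\<psi>0 (NE i1) = \<phi> (NE i1)" "\<psi>0 (NE i2) = \<phi> (NE i2)" "\<psi>0 (NE r) = \<phi> (NE r)"
      using p0(3) p1(3) p2(3) d5 by auto
    have v2: "\<psi>0 (TE c1) = \<phi> (TE c1)" "\<psi>0 (TE c2) = \<phi> (TE c2)" "\<psi>0 (TE c3) = \<phi> Pn"
      using p0(3) p1(3) p2 d5T by auto
    have v3: "\<psi>0 (NE o2) = \<psi>0 (TE b2)"
      using p0(3) p1(2) d5 d5T by auto
    have ob: "\<psi>0 (NE o1) \<noteq> \<psi>0 (NE o2)"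
    proof
      assume "\<psi>0 (NE o1) = \<psi>0 (NE o2)"
      then have "\<psi>0 (TE b1) + \<psi>0 (TE b2) = 0" using p0(2) v3 by simp
      then show False using propT[OF cT] by simp
    qed
    have ii: "\<psi>0 (NE i1) = \<psi>0 (NE i2)"
      using keyN[OF cN] ob by auto
    have pN: "\<psi>0 (NE i1) + \<psi>0 (NE i2) + \<psi>0 (NE o1) + \<psi>0 (NE o2) + \<psi>0 (NE r) = 0"
      using parN[OF cN] by simp
    have pT: "\<psi>0 (TE b1) + \<psi>0 (TE b2) + \<psi>0 (TE c1) + \<psi>0 (TE c2) + \<psi>0 (TE c3) = 0"
      using parity[OF wfT cT] semT d5T by (simp add: add.assoc)
    have h: "\<psi>0 (NE i1) + \<psi>0 (NE i2) = 0" using ii by simp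
    have "\<psi>0 (NE o1) + \<psi>0 (NE o2) + \<psi>0 (NE r) = 0" using pN by (simp only: h add_0_left)
    then have pN': "\<psi>0 (TE b1) + \<psi>0 (TE b2) + \<phi> (NE r) = 0"
      by (simp only: p0(2) v3 v1(3))
    have pV: "\<phi> Pn + \<phi> Qn + \<phi> (NE r) = 0" using inf KK3 by blast
    have "\<phi> (TE c1) + \<phi> (TE c2) + \<phi> Qn = 0"
      using alg[OF pN' pT[unfolded v2] pV] .
    then show ?thesis using ii v1 inf by simp
  qed
  have part2: "\<exists>\<phi>. colouring (NT N T o1 o2 r b1 b2 c3) \<phi> \<and>
                 \<phi> (NE i1) = x \<and> \<phi> (NE i2) = x \<and>
                 \<phi> (TE c1) = a \<and> \<phi> (TE c2) = b \<and> \<phi> (TE c3) = c"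
    if pn: "perfect_negator N i1 i2 o1 o2 r" and pt: "perfect_23pole T b1 b2 c1 c2 c3"
      and xabc: "x \<in> KK" "a \<in> KK" "b \<in> KK" "c \<in> KK" "a + b + c = 0" for x a b c
  proof -
    obtain c' where c': "c' \<in> KK" "c' \<noteq> c" using other[OF xabc(4)] by blast
    define s where "s = c + c'"
    have s: "s \<in> KK" "s \<noteq> c" "s \<noteq> c'" using KKsum[OF xabc(4) c'(1)] c'(2) unfolding s_def by auto
    obtain p where p: "p \<in> KK" "p \<noteq> s" using other[OF s(1)] by blast
    define q where "q = p + s"
    have q: "q \<in> KK" "q \<noteq> p" using KKsum[OF p(1) s(1) p(2)] unfolding q_def by auto
    have pq: "p + q = s" unfolding q_def by simp
    have "(x, x, p, q, p + q) \<in> {(x, x, a, b, a + b) | x a b. x \<in> KK \<and> a \<in> KK \<and> b \<in> KK \<and> a \<noteq> b}"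
      using xabc p q by blast
    then have "(x, x, p, q, p + q) \<in> {(\<phi> i1, \<phi> i2, \<phi> o1, \<phi> o2, \<phi> r) | \<phi>. colouring N \<phi>}"
      using pn unfolding perfect_negator_def by blast
    then obtain \<psi>N where cN: "colouring N \<psi>N" "\<psi>N i1 = x" "\<psi>N i2 = x" "\<psi>N o1 = p" "\<psi>N o2 = q"
      "\<psi>N r = s" using pq by auto
    have ab: "a + b = c" using xabc(5) sum0_eq by metis
    have e1: "p + q = a + b + c'" using pq ab unfolding s_def by simp
    have e2: "p + q \<noteq> 0" using pq KKnz[OF s(1)] by simp
    have "(p, q, a, b, c') \<in> {(x1, x2, y1, y2, y3) | x1 x2 y1 y2 y3.
        x1 \<in> KK \<and> x2 \<in> KK \<and> y1 \<in> KK \<and> y2 \<in> KK \<and> y3 \<in> KK \<and>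
        x1 + x2 = y1 + y2 + y3 \<and> x1 + x2 \<noteq> 0}"
      using p q xabc c' e1 e2 by blast
    then have "(p, q, a, b, c') \<in> {(\<phi> b1, \<phi> b2, \<phi> c1, \<phi> c2, \<phi> c3) | \<phi>. colouring T \<phi>}"
      using pt unfolding perfect_23pole_def by blast
    then obtain \<psi>T where cT: "colouring T \<psi>T" "\<psi>T b1 = p" "\<psi>T b2 = q" "\<psi>T c1 = a" "\<psi>T c2 = b"
      "\<psi>T c3 = c'" by auto
    define \<phi>0 where "\<phi>0 = case_ntend \<psi>N \<psi>T c' c"
    have col0: "colouring M0 \<phi>0" unfolding M0_def \<phi>0_def using ms_fwd[OF cN(1) cT(1)] .
    have col1: "colouring M1 \<phi>0" unfolding M1_def
      using junction_fwd[OF inv0 J1 col0] cN cT unfolding \<phi>0_def by simp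
    have col2: "colouring M2 \<phi>0" unfolding M2_def
      using junction_fwd[OF inv1 J2 col1] cN cT unfolding \<phi>0_def by simp
    have col3: "colouring (subdiv_attach M2 (TE c3) (NE r)) (\<phi>0(Pn := \<phi>0 (TE c3), Qn := c, TE c3 := c))"
      using SA.sa_fwd[OF sa col2, of c] xabc(4) c' s cN cT unfolding \<phi>0_def by auto
    show ?thesis
      apply (rule exI[of _ "\<phi>0(Pn := \<phi>0 (TE c3), Qn := c, TE c3 := c)"])
      using col3 M3 cN cT d5T unfolding \<phi>0_def by auto
  qed
  show ?thesis using part1 part2 by blast
qed

end
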